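(* Let $P,Q$ be nonzero coprime integers with $\Delta:=P^2-4Q\neq0$, such that $\alpha/\beta$ is not a root of unity, where $\alpha,\beta$ are the roots of $x^2-Px+Q$. Let $(U_n)$ be the Lucas sequence $U_n=(\alpha^n-\beta^n)/(\alpha-\beta)$. Then for every positive integer $n$, \[\mathrm{lcm}(U_1,U_2,\dots,U_n)=\mathrm{lcm}\left(U_n,U_{n-1},\dots,U_{n-\lceil n/2\rceil+1}\right).\]
   Context: $U_0=0$, $U_1=1$, $U_{n+2}=PU_{n+1}-QU_n$. *)

theory Defs
  imports Complex_Main
begin

fun lucasU :: "int \<Rightarrow> int \<Rightarrow> nat \<Rightarrow> int" where
  "lucasU P Q 0 = 0"
| "lucasU P Q (Suc 0) = 1"
| "lucasU P Q (Suc (Suc n)) = P * lucasU P Q (Suc n) - Q * lucasU P Q n"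

definition lucas_alpha :: "int \<Rightarrow> int \<Rightarrow> complex" where
  "lucas_alpha P Q = (of_int P + csqrt (of_int (P^2 - 4*Q))) / 2"

definition lucas_beta :: "int \<Rightarrow> int \<Rightarrow> complex" where
  "lucas_beta P Q = (of_int P - csqrt (of_int (P^2 - 4*Q))) / 2"

definition root_of_unity :: "complex \<Rightarrow> bool" where
  "root_of_unity z \<longleftrightarrow> (\<exists>k::nat. k \<ge> 1 \<and> z ^ k = 1)"

end

theory Submission
  imports Defs
begin

lemma lucas_add:
  "lucasU P Q (m + n + 1) = lucasU P Q (m+1) * lucasU P Q (n+1) - Q * lucasU P Q m * lucasU P Q n"
proof (induction n rule: nat_less_induct)
  case (1 n)
  show ?case
  proof (cases n)
    case 0 then show ?thesis by simp
  next
    case (Suc n1)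
    show ?thesis
    proof (cases n1)
      case 0 then show ?thesis using Suc by (simp add: algebra_simps)
    next
      case (Suc k)
      have "n = k + 2" using Suc \<open>n = Suc n1\<close> by simp
      have a: "lucasU P Q (m + (k+1) + 1) = lucasU P Q (m+1) * lucasU P Q (k+1+1) - Q * lucasU P Q m * lucasU P Q (k+1)"
        using 1 \<open>n = k+2\<close> by (auto simp del: lucasU.simps)
      have b: "lucasU P Q (m + k + 1) = lucasU P Q (m+1) * lucasU P Q (k+1) - Q * lucasU P Q m * lucasU P Q k"
        using 1 \<open>n = k+2\<close> by (auto simp del: lucasU.simps)
      have c: "lucasU P Q (m + n + 1) = P * lucasU P Q (m + (k+1) + 1) - Q * lucasU P Q (m + k + 1)"
        using \<open>n = k+2\<close> by (simp add: numeral_2_eq_2 add.commute)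
      have d: "lucasU P Q (n+1) = P * lucasU P Q (k+1+1) - Q * lucasU P Q (k+1)"
        "lucasU P Q n = P * lucasU P Q (k+1) - Q * lucasU P Q k"
        using \<open>n = k+2\<close> by (simp_all add: numeral_2_eq_2)
      show ?thesis unfolding c a b d by (simp add: algebra_simps)
    qed
  qed
qed

lemma lucas_dvd_mult: "lucasU P Q k dvd lucasU P Q (k * c)"
proof (induction c)
  case 0 then show ?case by simp
next
  case (Suc c)
  show ?case
  proof (cases k)
    case 0 then show ?thesis by simp
  next
    case (Suc k')
    have "k * Suc c = k*c + k' + 1" using Suc by simp
    hence "lucasU P Q (k * Suc c) = lucasU P Q (k*c + k' + 1)" by (simp only:)
    also have "\<dots> = lucasU P Q (k*c+1) * lucasU P Q k - Q * lucasU P Q (k*c) * lucasU P Q k'"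
      using lucas_add[of P Q "k*c" k'] Suc by simp
    finally show ?thesis using \<open>lucasU P Q k dvd lucasU P Q (k * c)\<close> by simp
  qed
qed

lemma aux_lt: "r < k \<Longrightarrow> q + r = n \<Longrightarrow> k \<le> n \<Longrightarrow> n - k < (q::nat)"
  by linarith

theorem corollary5:
  fixes P Q :: int and n :: nat
  assumes "P \<noteq> 0" and "Q \<noteq> 0" and "coprime P Q"
    and "P^2 - 4*Q \<noteq> 0"
    and "\<not> root_of_unity (lucas_alpha P Q / lucas_beta P Q)"
    and "n \<ge> 1"
  shows "Lcm (lucasU P Q ` {1..n}) =
         Lcm (lucasU P Q ` {n - nat \<lceil>real n / 2\<rceil> + 1..n})"
proof -
  have ce: "\<lceil>real n / 2\<rceil> = int (n - n div 2)"
    by (subst ceiling_eq_iff) linarith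
  have lo: "n - nat \<lceil>real n / 2\<rceil> + 1 = n div 2 + 1" unfolding ce by simp
  let ?B = "lucasU P Q ` {n div 2 + 1..n}"
  have "Lcm (lucasU P Q ` {1..n}) dvd Lcm ?B"
  proof (rule Lcm_least)
    fix a assume "a \<in> lucasU P Q ` {1..n}"
    then obtain k where k: "1 \<le> k" "k \<le> n" "a = lucasU P Q k" by auto
    show "a dvd Lcm ?B"
    proof (cases "k > n div 2")
      case True then show ?thesis using k by (auto intro: dvd_Lcm)
    next
      case False
      have m1: "k * (n div k) \<le> n" by simp
      have m2: "n - k < k * (n div k)"
      proof -
        have "n mod k < k" using k by simp
        moreover have "k*(n div k) + n mod k = n" by (simp add: mult.commute)
        ultimately show ?thesis
          by (rule aux_lt[OF _ _ k(2)])
      qed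
      have "lucasU P Q (k * (n div k)) \<in> ?B" using m1 m2 False by auto
      hence "lucasU P Q (k * (n div k)) dvd Lcm ?B" by (rule dvd_Lcm)
      then show ?thesis using k lucas_dvd_mult dvd_trans by blast
    qed
  qed
  moreover have "Lcm ?B dvd Lcm (lucasU P Q ` {1..n})"
    by (rule Lcm_subset) auto
  ultimately show ?thesis unfolding lo
    by (rule associated_eqI[OF _ _ normalize_Lcm normalize_Lcm])
qed

end
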